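(* Let $K\ge 1$ and $r$ be integers such that $K-r$ is a positive divisor of $K$, and put $g=\frac{K}{K-r}$. For integers $a,b$ write $(a)_b$ for $a \bmod b$. For $k\in[0,g)$ let $\mathcal{C}_k=\{(k+ig)_K : i\in[0,K-r)\}$. Consider the data shuffling problem (described in the context) with $K$ nodes $[0,K)$, $K$ messages $V_0,\dots,V_{K-1}$, where node $k$ wants $V_k$ and knows the messages with indices in $\mathcal{S}_k=[0,K)\setminus\{(k+ig)_K : i\in[0,K-r)\}$, and node $k$ broadcasts over a noiseless link of capacity $C_k\ge 0$. Then the capacity region of this problem equals $$\Big\{(R_k : k\in[0,K))\in\mathbb{R}_{+}^{K} \;:\; \sum_{i\in[0,K-r)} R_{(k+ig)_K} \le \sum_{j\in[0,K)\setminus \mathcal{C}_k} C_j \ \text{ for all } k\in[0,g)\Big\}.$$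
   Context: Notation: $[a,b)=\{a,a+1,\dots,b-1\}$ and $[n]=\{1,\dots,n\}$. Origin of the problem (MapReduce distributed computing): $N$ input files are split into $g$ disjoint batches $B_0,\dots,B_{g-1}$; node $k\in[0,K)$ stores every batch except $B_{(k)_g}$ and computes intermediate values of all output functions from its stored files. Each node $k$ is assigned a disjoint set $\mathcal{W}_k$ of output functions (all of equal size) and must obtain the message $V_k$, the concatenation of the intermediate values of the functions in $\mathcal{W}_k$ computed from the files of batch $B_{(k)_g}$. Thus node $k$ knows $V_j$ exactly when $(j)_g\neq(k)_g$, i.e. when $j\in\mathcal{S}_k=[0,K)\setminus\{(k+ig)_K: i\in[0,K-r)\}$. (Here $r$ is the computation load, the total number of batch copies stored divided by the number of batches.) Data shuffling code: the messages $V_k$, $k\in[0,K)$, are independent, with $V_k$ uniformly distributed on $[2^{nR_k}]$, where $n$ is the blocklength and $R_k\ge 0$ the rate. A $((2^{nR_k})_{k},(2^{nC_k})_k,n)$ code consists of an encoder at each node $k$ mapping the messages $(V_j: j\in\mathcal{S}_k)$ to a codeword $Y_k\in[2^{nC_k}]$ broadcast to all other nodes, and a decoder at each node $k$ mapping $(Y_j : j\in[0,K)\setminus\{k\})$ together with its side information $(V_j: j\in\mathcal{S}_k)$ to an estimate $\hat V_k$. The error probability is $P_e^{(n)}=\Pr[(\hat V_k)_k\neq (V_k)_k]$. A rate tuple $(R_k)_k$ is achievable for link capacities $(C_k)_k$ if there is a sequence of such codes with $P_e^{(n)}\to 0$ as $n\to\infty$; the capacity region is the closure of the set of achievable rate tuples.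 *)

theory Defs
  imports "HOL-Analysis.Analysis"
begin

text \<open>Data shuffling problem with K nodes, computation load r, g = K div (K - r).
  Rate / capacity tuples are functions nat => real; only indices below K matter.\<close>

definition grp :: "nat \<Rightarrow> nat \<Rightarrow> nat" where
  "grp K r = K div (K - r)"

definition cls :: "nat \<Rightarrow> nat \<Rightarrow> nat \<Rightarrow> nat set" where
  "cls K r k = {(k + i * grp K r) mod K | i. i < K - r}"

definition side :: "nat \<Rightarrow> nat \<Rightarrow> nat \<Rightarrow> nat set" where
  "side K r k = {0..<K} - cls K r k"

definition msg_size :: "nat \<Rightarrow> real \<Rightarrow> nat" where
  "msg_size n x = nat \<lceil>2 powr (real n * x)\<rceil>"

definition cw_size :: "nat \<Rightarrow> real \<Rightarrow> nat" where
  "cw_size n x = nat \<lfloor>2 powr (real n * x)\<rfloor>"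

definition msgs :: "nat \<Rightarrow> (nat \<Rightarrow> real) \<Rightarrow> nat \<Rightarrow> (nat \<Rightarrow> nat) set" where
  "msgs K R n = PiE {0..<K} (\<lambda>k. {0..<msg_size n (R k)})"

definition is_code :: "nat \<Rightarrow> nat \<Rightarrow> (nat \<Rightarrow> real) \<Rightarrow> (nat \<Rightarrow> real) \<Rightarrow> nat
    \<Rightarrow> (nat \<Rightarrow> (nat \<Rightarrow> nat) \<Rightarrow> nat)
    \<Rightarrow> (nat \<Rightarrow> (nat \<Rightarrow> nat) \<Rightarrow> (nat \<Rightarrow> nat) \<Rightarrow> nat) \<Rightarrow> bool" where
  "is_code K r C R n enc dec \<longleftrightarrow>
     (\<forall>k<K. \<forall>v v'. (\<forall>j\<in>side K r k. v j = v' j) \<longrightarrow> enc k v = enc k v') \<and>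
     (\<forall>k<K. \<forall>v\<in>msgs K R n. enc k v < cw_size n (C k)) \<and>
     (\<forall>k<K. \<forall>y y' v v'. (\<forall>j<K. j \<noteq> k \<longrightarrow> y j = y' j) \<longrightarrow>
         (\<forall>j\<in>side K r k. v j = v' j) \<longrightarrow> dec k y v = dec k y' v')"

text \<open>error probability under independent uniform messages\<close>
definition err_prob :: "nat \<Rightarrow> (nat \<Rightarrow> real) \<Rightarrow> nat
    \<Rightarrow> (nat \<Rightarrow> (nat \<Rightarrow> nat) \<Rightarrow> nat)
    \<Rightarrow> (nat \<Rightarrow> (nat \<Rightarrow> nat) \<Rightarrow> (nat \<Rightarrow> nat) \<Rightarrow> nat) \<Rightarrow> real" where
  "err_prob K R n enc dec =
     real (card {v \<in> msgs K R n. \<exists>k<K. dec k (\<lambda>j. enc j v) v \<noteq> v k})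
     / real (card (msgs K R n))"

definition achievable :: "nat \<Rightarrow> nat \<Rightarrow> (nat \<Rightarrow> real) \<Rightarrow> (nat \<Rightarrow> real) \<Rightarrow> bool" where
  "achievable K r C R \<longleftrightarrow>
     (\<forall>k<K. 0 \<le> R k) \<and> (\<forall>k\<ge>K. R k = 0) \<and>
     (\<exists>enc dec. (\<forall>n. is_code K r C R n (enc n) (dec n)) \<and>
        (\<lambda>n. err_prob K R n (enc n) (dec n)) \<longlonglongrightarrow> 0)"

definition capacity_region :: "nat \<Rightarrow> nat \<Rightarrow> (nat \<Rightarrow> real) \<Rightarrow> (nat \<Rightarrow> real) set" where
  "capacity_region K r C = closure {R. achievable K r C R}"

end

theory Submission
  imports Defs
begin

context
  fixes K r :: nat
  assumes K1: "K \<ge> 1" and rK: "r < K" and dv: "(K - r) dvd K"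
begin

lemma gh: "grp K r * (K - r) = K"
  using dv unfolding grp_def by simp

lemma g1: "grp K r \<ge> 1"
  using gh K1 by (cases "grp K r") auto

lemma gdvd: "grp K r dvd K"
  using gh by (metis dvd_triv_left)

lemma cls_char: "cls K r j = {x. x < K \<and> x mod grp K r = j mod grp K r}"
proof (intro set_eqI iffI)
  fix x assume "x \<in> cls K r j"
  then obtain i where x: "x = (j + i * grp K r) mod K" unfolding cls_def by blast
  have "x < K" using x K1 by simp
  moreover have "x mod grp K r = j mod grp K r"
    using x gdvd by (simp add: mod_mod_cancel)
  ultimately show "x \<in> {x. x < K \<and> x mod grp K r = j mod grp K r}" by simp
next
  fix x assume "x \<in> {x. x < K \<and> x mod grp K r = j mod grp K r}"
  hence xK: "x < K" and xm: "x mod grp K r = j mod grp K r" by auto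
  define g where "g = grp K r"
  define h where "h = K - r"
  have Kgh: "K = g * h" using gh g_def h_def by simp
  have hpos: "h > 0" using rK h_def by simp
  define d where "d = x + K - j mod K"
  have jK: "j mod K < K" using K1 by simp
  have "d mod g = 0"
  proof -
    have "int d = int x + int K - int (j mod K)" using jK d_def by simp
    hence "int d = (int x - int (j mod K)) + int g * int h"
      using Kgh by simp
    hence "int d mod int g = (int x - int (j mod K)) mod int g"
      by simp
    also have "... = 0"
    proof -
      have "(j mod K) mod g = j mod g" using gdvd g_def by (simp add: mod_mod_cancel)
      hence "int x mod int g = int (j mod K) mod int g" using xm g_def
        by (metis of_nat_mod)
      thus ?thesis by (simp add: mod_eq_dvd_iff dvd_eq_mod_eq_0)
    qed
    finally show ?thesis by (metis of_nat_0 of_nat_eq_iff zmod_int)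
  qed
  then obtain e where de: "d = g * e" by (metis dvd_eq_mod_eq_0 dvdE)
  define i where "i = e mod h"
  have ih: "i < h" using hpos i_def by simp
  have "(j + i * g) mod K = (j + e * g) mod K"
  proof -
    have "j + e * g = j + (e mod h + h * (e div h)) * g" by (simp only: mod_mult_div_eq)
    also have "... = (j + i * g) + (e div h) * K"
    proof -
      have "\<And>a q. j + (a + h * q) * g = (j + a * g) + q * (g * h)" by (simp add: algebra_simps)
      thus ?thesis unfolding i_def Kgh by blast
    qed
    finally show ?thesis by (metis mod_mult_self1)
  qed
  also have "j + e * g = j + d" using de by (simp add: mult.commute)
  also have "(j + d) mod K = x"
  proof -
    have jj: "j = j mod K + K * (j div K)" by simp
    have "j + d = x + K + K * (j div K)" using d_def jK jj by linarith
    hence "j + d = x + K * (1 + j div K)" by (simp add: algebra_simps)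
    thus ?thesis using xK by (metis mod_less mod_mult_self2)
  qed
  finally have "(j + i * g) mod K = x" .
  thus "x \<in> cls K r j" unfolding cls_def using ih g_def h_def by blast
qed


lemma side_char: "side K r j = {x. x < K \<and> x mod grp K r \<noteq> j mod grp K r}"
  unfolding side_def cls_char by auto

lemma cls_sub: "cls K r j \<subseteq> {0..<K}"
  unfolding cls_char by auto

lemma cls_self: "j < K \<Longrightarrow> j \<in> cls K r j"
  unfolding cls_char by auto

lemma side_same: "i \<in> cls K r j \<Longrightarrow> side K r i = side K r j"
  unfolding cls_char side_char by auto

lemma cls_side_disj: "cls K r j \<inter> side K r j = {}"
  unfolding cls_char side_char by auto

lemma cls_side_un: "cls K r j \<union> side K r j = {0..<K}"
  unfolding cls_char side_char by auto

lemma msg_size_pos: "msg_size n x \<ge> 1"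
proof -
  have "0 < 2 powr (real n * x)" by simp
  hence "0 < \<lceil>2 powr (real n * x)\<rceil>" by (simp add: zero_less_ceiling)
  thus ?thesis unfolding msg_size_def by linarith
qed

lemma converse_bound:
  assumes code: "is_code K r C R n enc dec" and kK: "k < K"
  shows "err_prob K R n enc dec \<ge>
    1 - (\<Prod>i\<in>side K r k. real (cw_size n (C i))) / (\<Prod>j\<in>cls K r k. real (msg_size n (R j)))"
proof -
  define M where "M = msgs K R n"
  define m where "m = (\<lambda>j. msg_size n (R j))"
  define c where "c = (\<lambda>i. cw_size n (C i))"
  define S where "S = {v\<in>M. \<forall>j<K. dec j (\<lambda>i. enc i v) v = v j}"
  define Dk where "Dk = side K r k"
  define Gk where "Gk = cls K r k"
  have fD: "finite Dk" unfolding Dk_def side_def by simp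
  have fG: "finite Gk" using cls_sub[of k] finite_subset unfolding Gk_def by blast
  have encdep: "\<And>i v v'. i < K \<Longrightarrow> (\<forall>j\<in>side K r i. v j = v' j) \<Longrightarrow> enc i v = enc i v'"
    using code unfolding is_code_def by blast
  have encb: "\<And>i v. i < K \<Longrightarrow> v \<in> M \<Longrightarrow> enc i v < c i"
    using code unfolding is_code_def M_def c_def by blast
  have decdep: "\<And>j y y' v v'. j < K \<Longrightarrow> (\<forall>i<K. i \<noteq> j \<longrightarrow> y i = y' i) \<Longrightarrow>
         (\<forall>i\<in>side K r j. v i = v' i) \<Longrightarrow> dec j y v = dec j y' v'"
    using code unfolding is_code_def by blast
  define \<Phi> where "\<Phi> = (\<lambda>v. (restrict v Dk, restrict (\<lambda>i. enc i v) Dk))"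
  have inj: "inj_on \<Phi> S"
  proof (rule inj_onI)
    fix v v' assume vS: "v \<in> S" and v'S: "v' \<in> S" and eq: "\<Phi> v = \<Phi> v'"
    have vD: "\<And>i. i \<in> Dk \<Longrightarrow> v i = v' i" using eq unfolding \<Phi>_def
      by (metis (no_types, lifting) prod.inject restrict_apply')
    have eD: "\<And>i. i \<in> Dk \<Longrightarrow> enc i v = enc i v'" using eq unfolding \<Phi>_def
      by (metis (no_types, lifting) prod.inject restrict_apply')
    have vM: "v \<in> M" and v'M: "v' \<in> M" using vS v'S S_def by auto
    show "v = v'"
    proof
      fix j
      show "v j = v' j"
      proof (cases "j < K")
        case False
        thus ?thesis using vM v'M unfolding M_def msgs_def by (auto simp: PiE_def extensional_def)
      next
        case jK: True
        show ?thesis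
        proof (cases "j \<in> Dk")
          case True thus ?thesis using vD by blast
        next
          case False
          hence jG: "j \<in> cls K r k" using jK cls_side_un[of k] Dk_def by auto
          have sj: "side K r j = Dk" using side_same[OF jG] Dk_def by simp
          have "\<forall>i<K. i \<noteq> j \<longrightarrow> enc i v = enc i v'"
          proof (intro allI impI)
            fix i assume iK: "i < K" and "i \<noteq> j"
            show "enc i v = enc i v'"
            proof (cases "i \<in> Dk")
              case True thus ?thesis using eD by blast
            next
              case False
              hence "i \<in> cls K r k" using iK cls_side_un[of k] Dk_def by auto
              hence "side K r i = Dk" using side_same Dk_def by simp
              thus ?thesis using encdep[OF iK] vD by simp
            qed
          qed
          hence "dec j (\<lambda>i. enc i v) v = dec j (\<lambda>i. enc i v') v'"
            using decdep[OF jK] vD sj by simp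
          thus ?thesis using vS v'S jK unfolding S_def by simp
        qed
      qed
    qed
  qed
  have img: "\<Phi> ` S \<subseteq> PiE Dk (\<lambda>j. {0..<m j}) \<times> PiE Dk (\<lambda>i. {0..<c i})"
  proof
    fix p assume "p \<in> \<Phi> ` S"
    then obtain v where vS: "v \<in> S" and p: "p = \<Phi> v" by blast
    have vM: "v \<in> M" using vS S_def by auto
    have DK: "Dk \<subseteq> {0..<K}" unfolding Dk_def side_def by auto
    have "restrict v Dk \<in> PiE Dk (\<lambda>j. {0..<m j})"
      using vM DK unfolding M_def msgs_def m_def by (auto simp: PiE_iff)
    moreover have "restrict (\<lambda>i. enc i v) Dk \<in> PiE Dk (\<lambda>i. {0..<c i})"
      using encb vM DK by (auto simp: PiE_iff)
    ultimately show "p \<in> PiE Dk (\<lambda>j. {0..<m j}) \<times> PiE Dk (\<lambda>i. {0..<c i})"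
      using p \<Phi>_def by simp
  qed
  have cardS: "card S \<le> (\<Prod>j\<in>Dk. m j) * (\<Prod>i\<in>Dk. c i)"
  proof -
    have "card S = card (\<Phi> ` S)" using inj card_image by metis
    also have "... \<le> card (PiE Dk (\<lambda>j. {0..<m j}) \<times> PiE Dk (\<lambda>i. {0..<c i}))"
      by (rule card_mono[OF _ img]) (simp add: fD finite_PiE)
    also have "... = (\<Prod>j\<in>Dk. m j) * (\<Prod>i\<in>Dk. c i)"
      by (simp add: card_cartesian_product card_PiE fD)
    finally show ?thesis .
  qed
  have cardM: "card M = (\<Prod>j\<in>Gk. m j) * (\<Prod>j\<in>Dk. m j)"
  proof -
    have "card M = (\<Prod>j\<in>{0..<K}. m j)" unfolding M_def msgs_def m_def by (simp add: card_PiE)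
    also have "{0..<K} = Gk \<union> Dk" using cls_side_un Gk_def Dk_def by simp
    also have "(\<Prod>j\<in>Gk \<union> Dk. m j) = (\<Prod>j\<in>Gk. m j) * (\<Prod>j\<in>Dk. m j)"
      by (rule prod.union_disjoint) (use fG fD cls_side_disj Gk_def Dk_def in auto)
    finally show ?thesis .
  qed
  have mpos: "\<And>j. m j \<ge> 1" unfolding m_def by (rule msg_size_pos)
  have mpos': "\<And>j. real (m j) > 0" using mpos by (metis of_nat_0_less_iff less_le_trans zero_less_one)
  have PG: "(\<Prod>j\<in>Gk. real (m j)) > 0" using mpos' by (simp add: prod_pos)
  have PD: "(\<Prod>j\<in>Dk. real (m j)) > 0" using mpos' by (simp add: prod_pos)
  have SM: "S \<subseteq> M" unfolding S_def by auto
  have fM: "finite M" unfolding M_def msgs_def by (simp add: finite_PiE)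
  have errset: "{v \<in> msgs K R n. \<exists>k<K. dec k (\<lambda>j. enc j v) v \<noteq> v k} = M - S"
    unfolding S_def M_def by auto
  have "err_prob K R n enc dec = real (card (M - S)) / real (card M)"
    unfolding err_prob_def errset M_def ..
  also have "real (card (M - S)) = real (card M) - real (card S)"
    using card_Diff_subset[OF finite_subset[OF SM fM] SM] card_mono[OF fM SM] by simp
  also have "(real (card M) - real (card S)) / real (card M) = 1 - real (card S) / real (card M)"
    using PG PD cardM by (simp add: diff_divide_distrib)
  finally have e: "err_prob K R n enc dec = 1 - real (card S) / real (card M)" .
  have "real (card S) / real (card M) \<le>
      ((\<Prod>j\<in>Dk. real (m j)) * (\<Prod>i\<in>Dk. real (c i))) / ((\<Prod>j\<in>Gk. real (m j)) * (\<Prod>j\<in>Dk. real (m j)))"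
  proof -
    have a: "real (card M) = (\<Prod>j\<in>Gk. real (m j)) * (\<Prod>j\<in>Dk. real (m j))"
      using cardM by simp
    have b: "real (card S) \<le> (\<Prod>j\<in>Dk. real (m j)) * (\<Prod>i\<in>Dk. real (c i))"
      using cardS by (metis of_nat_le_iff of_nat_mult of_nat_prod)
    show ?thesis unfolding a by (rule divide_right_mono[OF b]) (use PG PD in simp)
  qed
  also have "... = (\<Prod>i\<in>Dk. real (c i)) / (\<Prod>j\<in>Gk. real (m j))"
    using PD by simp
  finally show ?thesis using e unfolding Dk_def Gk_def c_def m_def by linarith
qed


lemma cls_mod: "cls K r (j mod grp K r) = cls K r j"
  unfolding cls_char by simp

lemma side_mod: "side K r (j mod grp K r) = side K r j"
  unfolding side_char by simp

lemma cw_size_pos: "x \<ge> 0 \<Longrightarrow> cw_size n x \<ge> 1"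
proof -
  assume "x \<ge> 0"
  hence "1 \<le> 2 powr (real n * x)" by (intro ge_one_powr_ge_zero) simp_all
  hence "1 \<le> \<lfloor>2 powr (real n * x)\<rfloor>" by (simp add: one_le_floor)
  thus ?thesis unfolding cw_size_def by linarith
qed

lemma achiev_code:
  assumes Cnn: "\<forall>k<K. 0 \<le> C k"
    and cap: "\<forall>k<grp K r. (\<Prod>j\<in>cls K r k. msg_size n (R j)) \<le> (\<Prod>i\<in>side K r k. cw_size n (C i))"
  shows "\<exists>enc dec. is_code K r C R n enc dec \<and> err_prob K R n enc dec = 0"
proof -
  define g where "g = grp K r"
  have gpos: "g > 0" using g1 g_def by simp
  define m where "m = (\<lambda>j. msg_size n (R j))"
  define c where "c = (\<lambda>i. cw_size n (C i))"
  define MS where "MS = (\<lambda>k. PiE (cls K r k) (\<lambda>j. {0..<m j}))"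
  define CS where "CS = (\<lambda>k. PiE (side K r k) (\<lambda>i. {0..<c i}))"
  have fcls: "\<And>k. finite (cls K r k)" using cls_sub finite_subset by blast
  have fside: "\<And>k. finite (side K r k)" unfolding side_def by simp
  have "\<forall>k. \<exists>f. k < g \<longrightarrow> f ` MS k \<subseteq> CS k \<and> inj_on f (MS k)"
  proof
    fix k
    show "\<exists>f. k < g \<longrightarrow> f ` MS k \<subseteq> CS k \<and> inj_on f (MS k)"
    proof (cases "k < g")
      case True
      have "card (MS k) \<le> card (CS k)"
        using cap True unfolding MS_def CS_def g_def m_def c_def
        by (simp add: card_PiE fcls fside)
      then obtain f where "f ` MS k \<subseteq> CS k" "inj_on f (MS k)"
        using card_le_inj[of "MS k" "CS k"] unfolding MS_def CS_def
        by (auto simp: finite_PiE fcls fside)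
      thus ?thesis by blast
    qed simp
  qed
  then obtain \<phi> where \<phi>: "\<And>k. k < g \<Longrightarrow> \<phi> k ` MS k \<subseteq> CS k \<and> inj_on (\<phi> k) (MS k)"
    by metis
  define enc where "enc = (\<lambda>i v. (\<Sum>k'\<in>{k'. k' < g \<and> k' \<noteq> i mod g}.
        \<phi> k' (restrict v (cls K r k')) i) mod c i)"
  define dec where "dec = (\<lambda>j y v. inv_into (MS (j mod g)) (\<phi> (j mod g))
      (\<lambda>i\<in>side K r j. nat ((int (y i) - (\<Sum>k'\<in>{k'. k' < g \<and> k' \<noteq> j mod g \<and> k' \<noteq> i mod g}.
          int (\<phi> k' (restrict v (cls K r k')) i))) mod int (c i))) j)"
  have cpos: "\<And>i. i < K \<Longrightarrow> c i \<ge> 1" unfolding c_def using Cnn cw_size_pos by blast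
  have code: "is_code K r C R n enc dec"
    unfolding is_code_def
  proof (intro conjI allI impI ballI)
    fix k and v v' :: "nat \<Rightarrow> nat" assume kK: "k < K" and ag: "\<forall>j\<in>side K r k. v j = v' j"
    have "\<And>k'. k' < g \<Longrightarrow> k' \<noteq> k mod g \<Longrightarrow> restrict v (cls K r k') = restrict v' (cls K r k')"
    proof -
      fix k' assume "k' < g" "k' \<noteq> k mod g"
      hence "cls K r k' \<subseteq> side K r k" unfolding cls_char side_char g_def by auto
      thus "restrict v (cls K r k') = restrict v' (cls K r k')" using ag by (intro restrict_ext) auto
    qed
    thus "enc k v = enc k v'" unfolding enc_def by (intro arg_cong2[where f="(mod)"] sum.cong) auto
  next
    fix k v assume kK: "k < K" and "v \<in> msgs K R n"
    show "enc k v < cw_size n (C k)" unfolding enc_def using cpos[OF kK] c_def by simp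
  next
    fix k and y y' v v' :: "nat \<Rightarrow> nat" assume kK: "k < K" and ay: "\<forall>j<K. j \<noteq> k \<longrightarrow> y j = y' j"
      and ag: "\<forall>j\<in>side K r k. v j = v' j"
    have rv: "\<And>k'. k' < g \<Longrightarrow> k' \<noteq> k mod g \<Longrightarrow> restrict v (cls K r k') = restrict v' (cls K r k')"
    proof -
      fix k' assume "k' < g" "k' \<noteq> k mod g"
      hence "cls K r k' \<subseteq> side K r k" unfolding cls_char side_char g_def by auto
      thus "restrict v (cls K r k') = restrict v' (cls K r k')" using ag by (intro restrict_ext) auto
    qed
    have yy: "\<And>i. i \<in> side K r k \<Longrightarrow> y i = y' i" using ay unfolding side_char by auto
    have "(\<lambda>i\<in>side K r k. nat ((int (y i) - (\<Sum>k'\<in>{k'. k' < g \<and> k' \<noteq> k mod g \<and> k' \<noteq> i mod g}.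
          int (\<phi> k' (restrict v (cls K r k')) i))) mod int (c i))) =
        (\<lambda>i\<in>side K r k. nat ((int (y' i) - (\<Sum>k'\<in>{k'. k' < g \<and> k' \<noteq> k mod g \<and> k' \<noteq> i mod g}.
          int (\<phi> k' (restrict v' (cls K r k')) i))) mod int (c i)))"
    proof -
      have ss: "\<And>i. (\<Sum>k'\<in>{k'. k' < g \<and> k' \<noteq> k mod g \<and> k' \<noteq> i mod g}.
          int (\<phi> k' (restrict v (cls K r k')) i)) = (\<Sum>k'\<in>{k'. k' < g \<and> k' \<noteq> k mod g \<and> k' \<noteq> i mod g}.
          int (\<phi> k' (restrict v' (cls K r k')) i))"
        by (rule sum.cong) (auto simp: rv)
      show ?thesis using yy by (intro restrict_ext) (simp add: ss)
    qed
    thus "dec k y v = dec k y' v'" unfolding dec_def by simp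
  qed
  have correct: "\<And>v j. v \<in> msgs K R n \<Longrightarrow> j < K \<Longrightarrow> dec j (\<lambda>i. enc i v) v = v j"
  proof -
    fix v j assume vM: "v \<in> msgs K R n" and jK: "j < K"
    define k where "k = j mod g"
    have kg: "k < g" using k_def gpos by simp
    define rv where "rv = restrict v (cls K r k)"
    have rvM: "rv \<in> MS k" using vM cls_sub[of k] unfolding rv_def MS_def msgs_def m_def
      by (auto simp: PiE_iff)
    have \<phi>rv: "\<phi> k rv \<in> CS k" using \<phi>[OF kg] rvM by blast
    have sk: "side K r k = side K r j" using side_mod k_def g_def by simp
    have "(\<lambda>i\<in>side K r j. nat ((int (enc i v) - (\<Sum>k'\<in>{k'. k' < g \<and> k' \<noteq> j mod g \<and> k' \<noteq> i mod g}.
          int (\<phi> k' (restrict v (cls K r k')) i))) mod int (c i))) = \<phi> k rv"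
    proof (rule ext)
      fix i
      show "(\<lambda>i\<in>side K r j. nat ((int (enc i v) - (\<Sum>k'\<in>{k'. k' < g \<and> k' \<noteq> j mod g \<and> k' \<noteq> i mod g}.
          int (\<phi> k' (restrict v (cls K r k')) i))) mod int (c i))) i = \<phi> k rv i"
      proof (cases "i \<in> side K r j")
        case False
        thus ?thesis using \<phi>rv sk unfolding CS_def by (auto simp: PiE_def extensional_def)
      next
        case True
        have iK: "i < K" and ik: "i mod g \<noteq> k" using True unfolding side_char k_def g_def by auto
        define A' where "A' = {k'. k' < g \<and> k' \<noteq> j mod g \<and> k' \<noteq> i mod g}"
        have A: "{k'. k' < g \<and> k' \<noteq> i mod g} = insert k A'" using kg ik unfolding A'_def k_def by auto
        have kA: "k \<notin> A'" unfolding A'_def k_def by auto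
        have fA: "finite A'" unfolding A'_def by simp
        define a where "a = \<phi> k rv i"
        define b where "b = (\<Sum>k'\<in>A'. \<phi> k' (restrict v (cls K r k')) i)"
        have ac: "a < c i" using \<phi>rv True sk unfolding a_def CS_def by (auto simp: PiE_iff)
        have rvk: "restrict v (cls K r k) = rv" unfolding rv_def ..
        have e: "enc i v = (a + b) mod c i"
          unfolding enc_def A using kA fA by (simp add: a_def b_def rvk)
        have "(int (enc i v) - (\<Sum>k'\<in>A'. int (\<phi> k' (restrict v (cls K r k')) i))) mod int (c i)
            = ((int a + int b) mod int (c i) - int b) mod int (c i)"
          unfolding e b_def by (simp add: of_nat_mod)
        also have "... = int a mod int (c i)" by (simp add: mod_diff_left_eq)
        also have "... = int a" using ac by simp
        finally show ?thesis using True unfolding A'_def a_def by simp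
      qed
    qed
    hence "dec j (\<lambda>i. enc i v) v = inv_into (MS k) (\<phi> k) (\<phi> k rv) j"
      unfolding dec_def k_def by simp
    also have "inv_into (MS k) (\<phi> k) (\<phi> k rv) = rv"
      using \<phi>[OF kg] rvM by (simp add: inv_into_f_f)
    also have "rv j = v j" unfolding rv_def using jK cls_self cls_mod k_def g_def by simp
    finally show "dec j (\<lambda>i. enc i v) v = v j" .
  qed
  have "{v \<in> msgs K R n. \<exists>k<K. dec k (\<lambda>j. enc j v) v \<noteq> v k} = {}" (is "?E = {}") using correct by auto
  hence "err_prob K R n enc dec = 0" unfolding err_prob_def by (subst \<open>?E = {}\<close>) simp
  thus ?thesis using code by blast
qed


lemma cls_reindex: "(\<Sum>i<K - r. f ((k + i * grp K r) mod K)) = (\<Sum>j\<in>cls K r k. (f j :: real))"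
proof -
  define g where "g = grp K r"
  define h where "h = K - r"
  have Kgh: "K = g * h" using gh g_def h_def by simp
  have gpos: "g > 0" using g1 g_def by simp
  have inj: "inj_on (\<lambda>i. (k + i * g) mod K) {..<h}"
  proof (rule ccontr)
    assume "\<not> inj_on (\<lambda>i. (k + i * g) mod K) {..<h}"
    then obtain i i' where ii: "i < h" "i' < h" "i \<noteq> i'" "(k + i * g) mod K = (k + i' * g) mod K"
      unfolding inj_on_def by auto
    have "\<exists>a b. a < b \<and> b < h \<and> (k + a * g) mod K = (k + b * g) mod K"
      using ii by (metis linorder_neqE_nat)
    then obtain a b where ab: "a < b" "b < h" "(k + a * g) mod K = (k + b * g) mod K" by blast
    have le: "k + a * g \<le> k + b * g" using ab by simp
    have "K dvd (k + b * g) - (k + a * g)" using mod_eq_dvd_iff_nat[OF le] ab(3) by metis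
    moreover have "(k + b * g) - (k + a * g) = g * (b - a)" by (simp add: algebra_simps diff_mult_distrib)
    ultimately have "g * h dvd g * (b - a)" using Kgh by simp
    hence "h dvd b - a" using gpos by simp
    moreover have "0 < b - a" "b - a < h" using ab by auto
    ultimately show False by (meson nat_dvd_not_less)
  qed
  have "cls K r k = (\<lambda>i. (k + i * g) mod K) ` {..<h}" unfolding cls_def g_def h_def by auto
  thus ?thesis using sum.reindex[OF inj, of f] g_def h_def by simp
qed

lemma msg_upper: "x \<ge> 0 \<Longrightarrow> real (msg_size n x) \<le> 2 * 2 powr (real n * x)"
proof -
  assume x: "x \<ge> 0"
  define y where "y = 2 powr (real n * x)"
  have y1: "1 \<le> y" unfolding y_def using x by (intro ge_one_powr_ge_zero) simp_all
  have "real (msg_size n x) = of_int \<lceil>y\<rceil>" unfolding msg_size_def y_def[symmetric]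
    using y1 by simp
  also have "... \<le> y + 1" by linarith
  also have "... \<le> 2 * y" using y1 by simp
  finally show ?thesis unfolding y_def .
qed

lemma msg_lower: "real (msg_size n x) \<ge> 2 powr (real n * x)"
proof -
  define y where "y = 2 powr (real n * x)"
  have y0: "0 < y" unfolding y_def by simp
  have "real (msg_size n x) = of_int \<lceil>y\<rceil>" unfolding msg_size_def y_def[symmetric]
    using y0 by simp
  also have "... \<ge> y" by linarith
  finally show ?thesis unfolding y_def .
qed

lemma cw_upper: "real (cw_size n x) \<le> 2 powr (real n * x)"
proof -
  define y where "y = 2 powr (real n * x)"
  have y0: "0 < y" unfolding y_def by simp
  have "real (cw_size n x) = of_int \<lfloor>y\<rfloor>" unfolding cw_size_def y_def[symmetric]
    using y0 by simp
  also have "... \<le> y" by linarith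
  finally show ?thesis unfolding y_def .
qed

lemma cw_lower: "x \<ge> 0 \<Longrightarrow> real (cw_size n x) \<ge> 2 powr (real n * x) / 2"
proof -
  assume x: "x \<ge> 0"
  define y where "y = 2 powr (real n * x)"
  have y1: "1 \<le> y" unfolding y_def using x by (intro ge_one_powr_ge_zero) simp_all
  have "real (cw_size n x) = of_int \<lfloor>y\<rfloor>" unfolding cw_size_def y_def[symmetric]
    using y1 by simp
  also have "... \<ge> y / 2"
  proof (cases "y < 2")
    case True
    hence "\<lfloor>y\<rfloor> = 1" using y1 by (simp add: floor_eq_iff)
    thus ?thesis using True by simp
  next
    case False thus ?thesis by linarith
  qed
  finally show ?thesis unfolding y_def .
qed

lemma prod_powr: "(\<Prod>j\<in>A. 2 powr (real n * f j)) = 2 powr (real n * sum f A)"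
  by (simp add: powr_sum sum_distrib_left)

lemma converse:
  assumes ach: "achievable K r C R" and kg: "k < grp K r"
  shows "(\<Sum>j\<in>cls K r k. R j) \<le> (\<Sum>j\<in>side K r k. C j)"
proof (rule ccontr)
  assume nle: "\<not> ?thesis"
  define \<delta> where "\<delta> = (\<Sum>j\<in>cls K r k. R j) - (\<Sum>j\<in>side K r k. C j)"
  have dpos: "\<delta> > 0" using nle unfolding \<delta>_def by simp
  obtain enc dec where code: "\<And>n. is_code K r C R n (enc n) (dec n)"
    and lim: "(\<lambda>n. err_prob K R n (enc n) (dec n)) \<longlonglongrightarrow> 0"
    using ach unfolding achievable_def by blast
  have "k < grp K r" by (rule kg)
  also have "grp K r \<le> K" unfolding grp_def by (rule div_le_dividend)
  finally have kK: "k < K" .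
  have ev1: "eventually (\<lambda>n. err_prob K R n (enc n) (dec n) < 1/2) sequentially"
    using order_tendstoD(2)[OF lim, of "1/2"] by simp
  then obtain N1 where N1: "\<And>n. N1 \<le> n \<Longrightarrow> err_prob K R n (enc n) (dec n) < 1/2"
    unfolding eventually_sequentially by blast
  obtain N2 where N2: "1 / \<delta> \<le> real N2" using real_arch_simple by blast
  define n where "n = max N1 N2"
  have e1: "err_prob K R n (enc n) (dec n) < 1/2" using N1 n_def by simp
  have "1 / \<delta> \<le> real n" using N2 n_def by simp
  hence e2: "1 \<le> real n * \<delta>" using dpos by (simp add: field_simps)
  have b: "err_prob K R n (enc n) (dec n) \<ge>
    1 - (\<Prod>i\<in>side K r k. real (cw_size n (C i))) / (\<Prod>j\<in>cls K r k. real (msg_size n (R j)))"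
    using converse_bound[OF code kK] .
  define A where "A = 2 powr (real n * (\<Sum>j\<in>side K r k. C j))"
  define B where "B = 2 powr (real n * (\<Sum>j\<in>cls K r k. R j))"
  have up: "(\<Prod>i\<in>side K r k. real (cw_size n (C i))) \<le> A"
    unfolding A_def prod_powr[symmetric] by (intro prod_mono) (simp add: cw_upper)
  have lo: "B \<le> (\<Prod>j\<in>cls K r k. real (msg_size n (R j)))"
    unfolding B_def prod_powr[symmetric] by (intro prod_mono) (simp add: msg_lower)
  have Bpos: "B > 0" unfolding B_def by simp
  have P0: "0 \<le> (\<Prod>i\<in>side K r k. real (cw_size n (C i)))" by (intro prod_nonneg) simp
  have "(\<Prod>i\<in>side K r k. real (cw_size n (C i))) / (\<Prod>j\<in>cls K r k. real (msg_size n (R j))) \<le> A / B"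
    by (rule frac_le[OF _ up Bpos lo]) (use P0 up in linarith)
  also have "A / B = 2 powr (- (real n * \<delta>))"
    unfolding A_def B_def \<delta>_def by (simp add: powr_diff[symmetric] algebra_simps)
  also have "... \<le> 2 powr (-1)" using e2 by (intro powr_mono) auto
  also have "... = 1/2" by (simp add: powr_minus)
  finally show False using b e1 by linarith
qed


lemma cap_eventually:
  assumes Cnn: "\<forall>k<K. 0 \<le> C k" and Rnn: "\<forall>k<K. 0 \<le> R k"
    and st: "(\<Sum>j\<in>cls K r k. R j) < (\<Sum>j\<in>side K r k. C j) \<or> (\<forall>j\<in>cls K r k. R j = 0)"
  shows "eventually (\<lambda>n. (\<Prod>j\<in>cls K r k. msg_size n (R j)) \<le> (\<Prod>i\<in>side K r k. cw_size n (C i))) sequentially"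
proof -
  have fcls: "finite (cls K r k)" using cls_sub finite_subset by blast
  have fside: "finite (side K r k)" unfolding side_def by simp
  have sideK: "\<And>i. i \<in> side K r k \<Longrightarrow> i < K" unfolding side_def by auto
  have clsK: "\<And>i. i \<in> cls K r k \<Longrightarrow> i < K" using cls_sub[of k] by auto
  have cge: "\<And>n. 1 \<le> (\<Prod>i\<in>side K r k. cw_size n (C i))"
    by (intro prod_ge_1 cw_size_pos) (use Cnn sideK in auto)
  show ?thesis
  proof (cases "\<forall>j\<in>cls K r k. R j = 0")
    case True
    have "\<And>n. (\<Prod>j\<in>cls K r k. msg_size n (R j)) = 1"
      using True by (intro prod.neutral) (simp add: msg_size_def)
    thus ?thesis using cge by simp
  next
    case False
    hence lt: "(\<Sum>j\<in>cls K r k. R j) < (\<Sum>j\<in>side K r k. C j)" using st by blast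
    define \<delta> where "\<delta> = (\<Sum>j\<in>side K r k. C j) - (\<Sum>j\<in>cls K r k. R j)"
    have dpos: "\<delta> > 0" using lt \<delta>_def by simp
    obtain N where N: "real K \<le> real N * \<delta>"
      using dpos by (metis real_arch_simple pos_divide_le_eq)
    have cardK: "card (cls K r k) + card (side K r k) = K"
      using card_Un_disjoint[OF fcls fside cls_side_disj[of k]] cls_side_un[of k] by simp
    show ?thesis unfolding eventually_sequentially
    proof (intro exI allI impI)
      fix n assume nN: "N \<le> n"
      hence "real N * \<delta> \<le> real n * \<delta>" using dpos by (simp add: mult_right_mono)
      hence nd: "real K \<le> real n * \<delta>" using N by linarith
      define a where "a = real n * (\<Sum>j\<in>cls K r k. R j)"
      define b where "b = real n * (\<Sum>j\<in>side K r k. C j)"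
      define cG where "cG = card (cls K r k)"
      define cD where "cD = card (side K r k)"
      have ab: "real K + a \<le> b" using nd unfolding a_def b_def \<delta>_def by (simp add: algebra_simps)
      have up: "real (\<Prod>j\<in>cls K r k. msg_size n (R j)) \<le> 2 ^ cG * 2 powr a"
      proof -
        have "real (\<Prod>j\<in>cls K r k. msg_size n (R j)) = (\<Prod>j\<in>cls K r k. real (msg_size n (R j)))"
          by simp
        also have "... \<le> (\<Prod>j\<in>cls K r k. 2 * 2 powr (real n * R j))"
          by (intro prod_mono) (use Rnn clsK msg_upper in auto)
        also have "... = 2 ^ cG * 2 powr a"
          unfolding prod.distrib prod_powr a_def cG_def by simp
        finally show ?thesis .
      qed
      have lo: "real (\<Prod>i\<in>side K r k. cw_size n (C i)) \<ge> 2 powr b * (1/2) ^ cD"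
      proof -
        have "2 powr b * (1/2) ^ cD = (\<Prod>i\<in>side K r k. 2 powr (real n * C i) * (1/2))"
          unfolding prod.distrib prod_powr b_def cD_def by simp
        also have "... \<le> (\<Prod>i\<in>side K r k. real (cw_size n (C i)))"
          by (intro prod_mono) (use Cnn sideK cw_lower in auto)
        finally show ?thesis by simp
      qed
      have "2 ^ cG * 2 powr a * 2 ^ cD = 2 powr (real K + a)"
      proof -
        have "(2::real) ^ cG * 2 ^ cD = 2 powr (real K)"
          using cardK unfolding cG_def cD_def by (simp add: powr_realpow power_add[symmetric])
        thus ?thesis by (simp add: powr_add algebra_simps)
      qed
      also have "... \<le> 2 powr b" using ab by simp
      finally have "2 ^ cG * 2 powr a \<le> 2 powr b * (1/2) ^ cD"
        by (simp add: field_simps power_one_over)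
      hence "real (\<Prod>j\<in>cls K r k. msg_size n (R j)) \<le> real (\<Prod>i\<in>side K r k. cw_size n (C i))"
        using up lo by linarith
      thus "(\<Prod>j\<in>cls K r k. msg_size n (R j)) \<le> (\<Prod>i\<in>side K r k. cw_size n (C i))"
        by (simp only: of_nat_le_iff)
    qed
  qed
qed

lemma achievable_strict:
  assumes Cnn: "\<forall>k<K. 0 \<le> C k" and Rnn: "\<forall>k<K. 0 \<le> R k" and Rz: "\<forall>k\<ge>K. R k = 0"
    and st: "\<forall>k<grp K r. (\<Sum>j\<in>cls K r k. R j) < (\<Sum>j\<in>side K r k. C j) \<or> (\<forall>j\<in>cls K r k. R j = 0)"
  shows "achievable K r C R"
proof -
  have "\<forall>k\<in>{..<grp K r}. eventually (\<lambda>n. (\<Prod>j\<in>cls K r k. msg_size n (R j)) \<le> (\<Prod>i\<in>side K r k. cw_size n (C i))) sequentially"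
    using cap_eventually[OF Cnn Rnn] st by blast
  hence "eventually (\<lambda>n. \<forall>k\<in>{..<grp K r}. (\<Prod>j\<in>cls K r k. msg_size n (R j)) \<le> (\<Prod>i\<in>side K r k. cw_size n (C i))) sequentially"
    by (intro eventually_ball_finite) auto
  then obtain N where N: "\<And>n. N \<le> n \<Longrightarrow> \<forall>k<grp K r. (\<Prod>j\<in>cls K r k. msg_size n (R j)) \<le> (\<Prod>i\<in>side K r k. cw_size n (C i))"
    unfolding eventually_sequentially by auto
  have triv: "\<And>n. is_code K r C R n (\<lambda>k v. 0) (\<lambda>k y v. 0)"
    unfolding is_code_def using cw_size_pos Cnn by (auto intro: less_le_trans[OF zero_less_one])
  have "\<forall>n. \<exists>e d. is_code K r C R n e d \<and> (N \<le> n \<longrightarrow> err_prob K R n e d = 0)"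
  proof
    fix n
    show "\<exists>e d. is_code K r C R n e d \<and> (N \<le> n \<longrightarrow> err_prob K R n e d = 0)"
    proof (cases "N \<le> n")
      case True
      then obtain e d where "is_code K r C R n e d" "err_prob K R n e d = 0"
        using achiev_code[OF Cnn N[OF True]] by blast
      thus ?thesis by blast
    next
      case False thus ?thesis using triv by blast
    qed
  qed
  then obtain E D where ED: "\<And>n. is_code K r C R n (E n) (D n) \<and> (N \<le> n \<longrightarrow> err_prob K R n (E n) (D n) = 0)"
    by metis
  have "(\<lambda>n. err_prob K R n (E n) (D n)) \<longlonglongrightarrow> 0"
    by (rule tendsto_eventually) (use ED in \<open>auto simp: eventually_sequentially\<close>)
  thus ?thesis unfolding achievable_def using Rnn Rz ED by blast
qed

end

theorem mainTheorem1:
  fixes K r :: nat and C :: "nat \<Rightarrow> real"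
  assumes "K \<ge> 1" and "r < K" and "(K - r) dvd K"
    and "\<forall>k<K. 0 \<le> C k"
  shows "capacity_region K r C =
    {R. (\<forall>k<K. 0 \<le> R k) \<and> (\<forall>k\<ge>K. R k = 0) \<and>
        (\<forall>k < grp K r. (\<Sum>i<K - r. R ((k + i * grp K r) mod K))
                          \<le> (\<Sum>j\<in>{0..<K} - cls K r k. C j))}"
    (is "_ = ?Reg")
proof -
  note A = assms(1-3)
  have reg: "?Reg = {R. (\<forall>k<K. 0 \<le> R k) \<and> (\<forall>k\<ge>K. R k = 0) \<and>
        (\<forall>k < grp K r. (\<Sum>j\<in>cls K r k. R j) \<le> (\<Sum>j\<in>side K r k. C j))}"
    unfolding cls_reindex[OF A] side_def ..
  have closedReg: "closed ?Reg"
    by (intro closed_Collect_conj closed_Collect_all closed_Collect_imp open_Collect_const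
        closed_Collect_le closed_Collect_eq continuous_on_sum continuous_on_const
        continuous_on_product_coordinates)
  have sub: "{R. achievable K r C R} \<subseteq> ?Reg"
  proof
    fix R assume "R \<in> {R. achievable K r C R}"
    hence a: "achievable K r C R" by simp
    have "\<And>k. k < grp K r \<Longrightarrow> (\<Sum>j\<in>cls K r k. R j) \<le> (\<Sum>j\<in>side K r k. C j)"
      using converse[OF A a] by blast
    thus "R \<in> ?Reg" unfolding reg using a unfolding achievable_def by blast
  qed
  have "capacity_region K r C \<subseteq> ?Reg"
    unfolding capacity_region_def by (rule closure_minimal[OF sub closedReg])
  moreover have "?Reg \<subseteq> capacity_region K r C"
  proof
    fix R assume "R \<in> ?Reg"
    hence Rnn: "\<forall>k<K. 0 \<le> R k" and Rz: "\<forall>k\<ge>K. R k = 0"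
      and Rs: "\<forall>k < grp K r. (\<Sum>j\<in>cls K r k. R j) \<le> (\<Sum>j\<in>side K r k. C j)"
      unfolding reg by auto
    have tach: "achievable K r C (\<lambda>j. t * R j)" if t0: "0 \<le> t" and t1: "t < 1" for t
    proof (rule achievable_strict[OF A assms(4)])
      show "\<forall>k<K. 0 \<le> t * R k" using Rnn t0 by simp
      show "\<forall>k\<ge>K. t * R k = 0" using Rz by simp
      show "\<forall>k<grp K r. (\<Sum>j\<in>cls K r k. t * R j) < (\<Sum>j\<in>side K r k. C j) \<or> (\<forall>j\<in>cls K r k. t * R j = 0)"
      proof (intro allI impI)
        fix k assume kg: "k < grp K r"
        have clsK: "\<And>i. i \<in> cls K r k \<Longrightarrow> i < K" using cls_sub[OF A, of k] by auto
        have fcls: "finite (cls K r k)" using cls_sub[OF A] finite_subset by blast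
        show "(\<Sum>j\<in>cls K r k. t * R j) < (\<Sum>j\<in>side K r k. C j) \<or> (\<forall>j\<in>cls K r k. t * R j = 0)"
        proof (cases "(\<Sum>j\<in>cls K r k. R j) = 0")
          case True
          hence "\<forall>j\<in>cls K r k. R j = 0" using sum_nonneg_eq_0_iff[OF fcls] Rnn clsK by blast
          thus ?thesis by simp
        next
          case False
          hence "(\<Sum>j\<in>cls K r k. R j) > 0" using sum_nonneg[of "cls K r k" R] Rnn clsK by force
          hence "t * (\<Sum>j\<in>cls K r k. R j) < (\<Sum>j\<in>cls K r k. R j)" using t1 by simp
          moreover have "(\<Sum>j\<in>cls K r k. R j) \<le> (\<Sum>j\<in>side K r k. C j)" using Rs kg by blast
          ultimately have "(\<Sum>j\<in>cls K r k. t * R j) < (\<Sum>j\<in>side K r k. C j)"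
            by (simp add: sum_distrib_left[symmetric])
          thus ?thesis ..
        qed
      qed
    qed
    define t where "t = (\<lambda>n. 1 - inverse (real (Suc n)))"
    have t0: "0 \<le> t n" and t1: "t n < 1" for n unfolding t_def by (auto simp: field_simps)
    have tl: "t \<longlonglongrightarrow> 1" unfolding t_def using tendsto_diff[OF tendsto_const LIMSEQ_inverse_real_of_nat, of 1] by simp
    have cont: "continuous_on UNIV (\<lambda>s::real. \<lambda>j. s * R j)"
      by (intro continuous_on_coordinatewise_then_product continuous_intros)
    have "(\<lambda>n. (\<lambda>s::real. \<lambda>j. s * R j) (t n)) \<longlonglongrightarrow> (\<lambda>s::real. \<lambda>j. s * R j) 1"
      by (rule continuous_on_tendsto_compose[OF cont tl]) auto
    hence lim: "(\<lambda>n. \<lambda>j. t n * R j) \<longlonglongrightarrow> R" by simp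
    show "R \<in> capacity_region K r C" unfolding capacity_region_def
      by (rule Lim_in_closed_set[OF closed_closure _ _ lim])
        (use tach t0 t1 in \<open>auto intro!: always_eventually closure_subset[THEN subsetD]\<close>)
  qed
  ultimately show ?thesis by blast
qed

end
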